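(* Let $m\ge2$. There exist constants $\alpha,c>0$ and $d\ge0$, depending only on $m$ and $n$, such that for all $A_1,\dots,A_m\in\mathcal{P}$, $$\mathrm{tr}(A_1A_2^{-1})+\mathrm{tr}(A_2A_3^{-1})+\dots+\mathrm{tr}(A_{m-1}A_m^{-1})\ge c\,\mathrm{tr}(A_1^\alpha A_m^{-\alpha})-d.$$
   Context: $\mathcal{P}$ is the space of positive definite $n\times n$ real symmetric matrices, with $n$ fixed; powers $A^\alpha$ are defined by functional calculus. *)

theory Defs
  imports "HOL-Analysis.Analysis"
begin

definition pos_def :: "real^'n^'n \<Rightarrow> bool" where
  "pos_def A \<longleftrightarrow> transpose A = A \<and> (\<forall>x. x \<noteq> 0 \<longrightarrow> x \<bullet> (A *v x) > 0)"

definition diag_mat :: "real^'n \<Rightarrow> real^'n^'n" where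
  "diag_mat d = (\<chi> i j. if i = j then d $ i else 0)"

definition mat_powr :: "real^'n^'n \<Rightarrow> real \<Rightarrow> real^'n^'n" where
  "mat_powr A a = (SOME B. \<exists>Q l. orthogonal_matrix Q \<and>
      A = Q ** diag_mat l ** transpose Q \<and>
      B = Q ** diag_mat (\<chi> i. (l $ i) powr a) ** transpose Q)"

end

theory Submission
  imports Defs
begin


lemma sym_inner:
  fixes A :: "real^'n^'n"
  assumes "transpose A = A"
  shows "x \<bullet> (A *v y) = (A *v x) \<bullet> y"
  by (metis assms dot_lmul_matrix transpose_matrix_vector)

lemma eigvec_exists:
  fixes A :: "real^'n^'n"
  assumes sym: "transpose A = A" and S: "subspace S" and inv: "\<forall>x\<in>S. A *v x \<in> S"
    and ne: "S \<noteq> {0}"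
  shows "\<exists>v\<in>S. norm v = 1 \<and> A *v v = (v \<bullet> (A *v v)) *\<^sub>R v"
proof -
  let ?K = "S \<inter> sphere 0 1"
  have cK: "compact ?K"
    by (metis Int_commute closed_subspace compact_Int_closed compact_sphere S)
  obtain x where x: "x \<in> S" "x \<noteq> 0" using ne S subspace_0 by blast
  have "x /\<^sub>R norm x \<in> ?K" using x S by (simp add: subspace_scale)
  hence neK: "?K \<noteq> {}" by blast
  have cont: "continuous_on ?K (\<lambda>x. x \<bullet> (A *v x))"
    by (intro continuous_intros continuous_on_inner linear_continuous_on matrix_vector_mul_linear continuous_on_id)
  obtain v where v: "v \<in> ?K" and vmax: "\<And>y. y \<in> ?K \<Longrightarrow> y \<bullet> (A *v y) \<le> v \<bullet> (A *v v)"
    using continuous_attains_sup[OF cK neK cont] by blast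
  define \<mu> where "\<mu> = v \<bullet> (A *v v)"
  have vS: "v \<in> S" and nv: "norm v = 1" using v by auto
  have bound: "y \<bullet> (A *v y) \<le> \<mu> * (y \<bullet> y)" if yS: "y \<in> S" for y
  proof (cases "y = 0")
    case True thus ?thesis by simp
  next
    case False
    let ?z = "y /\<^sub>R norm y"
    have "?z \<in> ?K" using yS False S by (simp add: subspace_scale)
    hence "?z \<bullet> (A *v ?z) \<le> \<mu>" using vmax \<mu>_def by blast
    moreover have "?z \<bullet> (A *v ?z) = (y \<bullet> (A *v y)) / (norm y)^2"
      by (simp add: matrix_vector_mult_scaleR power2_eq_square field_simps)
    moreover have "y \<bullet> y = (norm y)^2" by (simp add: power2_norm_eq_inner)
    ultimately show ?thesis using False
      by (simp add: divide_le_eq)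
  qed
  define w where "w = A *v v - \<mu> *\<^sub>R v"
  have wS: "w \<in> S" unfolding w_def using inv vS S by (simp add: subspace_diff subspace_scale)
  define C where "C = w \<bullet> (A *v w) - \<mu> * (w \<bullet> w)"
  have vv: "v \<bullet> v = 1" using nv by (simp add: norm_eq_1)
  have key: "2 * t * (w \<bullet> w) + t^2 * C \<le> 0" for t
  proof -
    have "v + t *\<^sub>R w \<in> S" using vS wS S by (simp add: subspace_add subspace_scale)
    hence b: "(v + t *\<^sub>R w) \<bullet> (A *v (v + t *\<^sub>R w)) \<le> \<mu> * ((v + t *\<^sub>R w) \<bullet> (v + t *\<^sub>R w))"
      by (rule bound)
    have s: "v \<bullet> (A *v w) = (A *v v) \<bullet> w" by (rule sym_inner[OF sym])
    have ww: "w \<bullet> (A *v v) = w \<bullet> w + \<mu> * (w \<bullet> v)"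
    proof -
      have "A *v v = w + \<mu> *\<^sub>R v" by (simp add: w_def)
      hence "w \<bullet> (A *v v) = w \<bullet> (w + \<mu> *\<^sub>R v)" by simp
      thus ?thesis by (simp add: inner_add_right)
    qed
    have Av: "A *v (v + t *\<^sub>R w) = A *v v + t *\<^sub>R (A *v w)"
      by (simp add: matrix_vector_right_distrib matrix_vector_mult_scaleR)
    have e0: "(v + t *\<^sub>R w) \<bullet> (A *v (v + t *\<^sub>R w)) = v \<bullet> (A *v v) + t * (v \<bullet> (A *v w)) + t * (w \<bullet> (A *v v)) + t^2 * (w \<bullet> (A *v w))"
      unfolding Av by (simp add: inner_add_left inner_add_right power2_eq_square algebra_simps)
    have s2: "v \<bullet> (A *v w) = w \<bullet> (A *v v)" using s by (simp add: inner_commute)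
    have e1: "(v + t *\<^sub>R w) \<bullet> (A *v (v + t *\<^sub>R w)) = \<mu> + 2 * t * (w \<bullet> (A *v v)) + t^2 * (w \<bullet> (A *v w))"
      unfolding e0 s2 \<mu>_def by simp
    have e2: "(v + t *\<^sub>R w) \<bullet> (v + t *\<^sub>R w) = 1 + 2 * t * (w \<bullet> v) + t^2 * (w \<bullet> w)"
      using vv by (simp add: inner_add_left inner_add_right power2_eq_square algebra_simps inner_commute[of v w])
    have b2: "\<mu> + 2 * t * (w \<bullet> (A *v v)) + t^2 * (w \<bullet> (A *v w)) \<le> \<mu> * (1 + 2 * t * (w \<bullet> v) + t^2 * (w \<bullet> w))"
      using b unfolding e1 e2 .
    have "2 * t * (w \<bullet> w) + t^2 * C = (\<mu> + 2 * t * (w \<bullet> (A *v v)) + t^2 * (w \<bullet> (A *v w))) - \<mu> * (1 + 2 * t * (w \<bullet> v) + t^2 * (w \<bullet> w))"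
      unfolding ww C_def by (simp add: algebra_simps)
    thus ?thesis using b2 by linarith
  qed
  have "w = 0"
  proof (rule ccontr)
    assume "w \<noteq> 0"
    hence wp: "w \<bullet> w > 0" by simp
    define t where "t = (w \<bullet> w) / (\<bar>C\<bar> + 1)"
    have tp: "t > 0" unfolding t_def using wp by simp
    have "t * (2 * (w \<bullet> w) + t * C) \<le> 0" using key[of t] by (simp add: power2_eq_square algebra_simps)
    hence "2 * (w \<bullet> w) + t * C \<le> 0" using tp by (simp add: mult_le_0_iff)
    hence "2 * (w \<bullet> w) \<le> - t * C" by simp
    also have "\<dots> \<le> t * \<bar>C\<bar>" using tp by (simp add: abs_if)
    also have "\<dots> < w \<bullet> w" unfolding t_def using wp
      by (simp add: field_simps)
    finally show False using wp by simp
  qed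
  thus ?thesis using vS nv unfolding w_def \<mu>_def by auto
qed


lemma eig_basis:
  fixes A :: "real^'n^'n"
  assumes sym: "transpose A = A"
  shows "subspace S \<Longrightarrow> (\<forall>x\<in>S. A *v x \<in> S) \<Longrightarrow>
    \<exists>B. B \<subseteq> S \<and> pairwise orthogonal B \<and> (\<forall>v\<in>B. norm v = 1 \<and> A *v v = (v \<bullet> (A *v v)) *\<^sub>R v) \<and> S \<subseteq> span B"
proof (induction "dim S" arbitrary: S rule: less_induct)
  case less
  show ?case
  proof (cases "S = {0}")
    case True
    thus ?thesis by (intro exI[of _ "{}"]) auto
  next
    case False
    obtain v where vS: "v \<in> S" and nv: "norm v = 1" and ev: "A *v v = (v \<bullet> (A *v v)) *\<^sub>R v"
      using eigvec_exists[OF sym less.prems False] by blast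
    define S' where "S' = S \<inter> {x. v \<bullet> x = 0}"
    have sS': "subspace S'" unfolding S'_def by (intro subspace_inter less.prems subspace_hyperplane)
    have invS': "\<forall>x\<in>S'. A *v x \<in> S'"
    proof
      fix x assume x: "x \<in> S'"
      have "v \<bullet> (A *v x) = (A *v v) \<bullet> x" by (rule sym_inner[OF sym])
      also have "\<dots> = 0" using x ev unfolding S'_def by (metis (mono_tags) inner_scaleR_left mem_Collect_eq Int_iff mult_zero_right)
      finally have "v \<bullet> (A *v x) = 0" .
      moreover have "A *v x \<in> S" using x less.prems(2) unfolding S'_def by blast
      ultimately show "A *v x \<in> S'" unfolding S'_def by blast
    qed
    have vv: "v \<bullet> v = 1" using nv by (simp add: norm_eq_1)
    have "span S' \<subset> span S"
    proof -
      have "S' \<subseteq> S" unfolding S'_def by auto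
      moreover have "v \<notin> S'" using vv unfolding S'_def by auto
      moreover have "span S' = S'" "span S = S" using sS' less.prems(1) by simp_all
      ultimately show ?thesis using vS by blast
    qed
    hence dlt: "dim S' < dim S" by (rule dim_psubset)
    have ex: "\<exists>B. B \<subseteq> S' \<and> pairwise orthogonal B \<and> (\<forall>v\<in>B. norm v = 1 \<and> A *v v = (v \<bullet> (A *v v)) *\<^sub>R v) \<and> S' \<subseteq> span B"
      by (rule less.hyps[OF dlt sS' invS'])
    then obtain B' where B': "B' \<subseteq> S'" "pairwise orthogonal B'"
      "\<forall>v\<in>B'. norm v = 1 \<and> A *v v = (v \<bullet> (A *v v)) *\<^sub>R v" "S' \<subseteq> span B'"
      by meson
    show ?thesis
    proof (intro exI[of _ "insert v B'"] conjI)
      show "insert v B' \<subseteq> S" using vS B'(1) unfolding S'_def by blast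
      show "pairwise orthogonal (insert v B')"
      proof -
        have "\<forall>y\<in>B'. v \<bullet> y = 0 \<and> y \<bullet> v = 0"
        proof
          fix y assume "y \<in> B'"
          hence "v \<bullet> y = 0" using B'(1) unfolding S'_def by blast
          thus "v \<bullet> y = 0 \<and> y \<bullet> v = 0" by (simp add: inner_commute)
        qed
        thus ?thesis using B'(2) unfolding pairwise_insert orthogonal_def by blast
      qed
      have P: "norm v = 1 \<and> A *v v = (v \<bullet> (A *v v)) *\<^sub>R v" using nv ev by (rule conjI)
      show "\<forall>w\<in>insert v B'. norm w = 1 \<and> A *v w = (w \<bullet> (A *v w)) *\<^sub>R w"
      proof
        fix w assume "w \<in> insert v B'"
        hence "w = v \<or> w \<in> B'" by (rule insertE) blast+
        thus "norm w = 1 \<and> A *v w = (w \<bullet> (A *v w)) *\<^sub>R w"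
        proof
          assume wv: "w = v" from P show ?thesis unfolding wv .
        next
          assume "w \<in> B'" thus ?thesis using B'(3) by (rule bspec[rotated])
        qed
      qed
      show "S \<subseteq> span (insert v B')"
      proof
        fix x assume x: "x \<in> S"
        have "x - (v \<bullet> x) *\<^sub>R v \<in> S" using x vS less.prems(1) by (simp add: subspace_diff subspace_scale)
        moreover have "v \<bullet> (x - (v \<bullet> x) *\<^sub>R v) = 0" using vv by (simp add: inner_diff_right)
        ultimately have "x - (v \<bullet> x) *\<^sub>R v \<in> S'" unfolding S'_def by blast
        hence "x - (v \<bullet> x) *\<^sub>R v \<in> span B'" using B'(4) by blast
        thus "x \<in> span (insert v B')" unfolding span_breakdown_eq by blast
      qed
    qed
  qed
qed

lemma spectral:
  fixes A :: "real^'n^'n"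
  assumes sym: "transpose A = A"
  shows "\<exists>Q l. orthogonal_matrix Q \<and> A = Q ** diag_mat l ** transpose Q"
proof -
  obtain B where B: "pairwise orthogonal B" "\<forall>v\<in>B. norm v = 1 \<and> A *v v = (v \<bullet> (A *v v)) *\<^sub>R v"
    "UNIV \<subseteq> span B"
    using eig_basis[OF sym subspace_UNIV] by blast
  have "0 \<notin> B" using B(2) by auto
  hence ind: "independent B" using B(1) pairwise_orthogonal_independent by blast
  have cB: "card B = CARD('n)" using basis_card_eq_dim[OF _ B(3) ind] by simp
  have fB: "finite B" using ind finiteI_independent by blast
  obtain f where f: "bij_betw f (UNIV::'n set) B"
    using finite_same_card_bij[OF finite_class.finite_UNIV fB] cB by auto
  have fB1: "\<And>i. f i \<in> B" using f bij_betwE by blast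
  have nf [simp]: "\<And>i. norm (f i) = 1" using fB1 B(2) by blast
  have [simp]: "\<And>i j. i \<noteq> j \<Longrightarrow> orthogonal (f i) (f j)"
  proof -
    fix i j :: 'n assume "i \<noteq> j"
    hence "f i \<noteq> f j" using f by (metis bij_betw_def inj_on_def UNIV_I)
    thus "orthogonal (f i) (f j)" using B(1) fB1 unfolding pairwise_def by blast
  qed
  define Q where "Q = (\<chi> i j. f j $ i)"
  define l where "l = (\<chi> j. f j \<bullet> (A *v f j))"
  have oQ: "orthogonal_matrix Q"
    unfolding Q_def by (simp add: orthogonal_matrix_orthonormal_columns column_def)
  have AQ: "A ** Q = Q ** diag_mat l"
  proof -
    have "(A ** Q) $ i $ j = (Q ** diag_mat l) $ i $ j" for i j
    proof -
      have "(A ** Q) $ i $ j = (A *v f j) $ i"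
        by (simp add: Q_def matrix_matrix_mult_def matrix_vector_mult_def)
      also have "\<dots> = l $ j * f j $ i"
      proof -
        have e: "A *v f j = (f j \<bullet> (A *v f j)) *\<^sub>R f j" using bspec[OF B(2) fB1[of j]] by (rule conjunct2)
        have "(A *v f j) $ i = ((f j \<bullet> (A *v f j)) *\<^sub>R f j) $ i" using e by (rule arg_cong)
        thus ?thesis unfolding l_def by simp
      qed
      also have "\<dots> = (Q ** diag_mat l) $ i $ j"
        by (simp add: Q_def matrix_matrix_mult_def diag_mat_def if_distrib cong: if_cong)
      finally show ?thesis .
    qed
    thus ?thesis by (simp add: vec_eq_iff)
  qed
  have "A = A ** (Q ** transpose Q)" using oQ by (simp add: orthogonal_matrix_def)
  also have "\<dots> = Q ** diag_mat l ** transpose Q" by (simp add: matrix_mul_assoc AQ)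
  finally show ?thesis using oQ by blast
qed




definition qf :: "real^'n^'n \<Rightarrow> real^'n \<Rightarrow> real" where
  "qf M x = x \<bullet> (M *v x)"

lemma inner_mat_left: "x \<bullet> ((Q::real^'n^'n) *v z) = (transpose Q *v x) \<bullet> z"
  by (metis dot_lmul_matrix transpose_matrix_vector)

lemma qf_conj: fixes Q D :: "real^'n^'n" shows "qf (Q ** D ** transpose Q) x = qf D (transpose Q *v x)"
proof -
  have "(Q ** D ** transpose Q) *v x = Q *v (D *v (transpose Q *v x))"
    by (metis matrix_vector_mul_assoc)
  thus ?thesis unfolding qf_def by (simp only: inner_mat_left[of x Q])
qed

lemma if_mult0: "(if P then a else 0) * (b::real) = (if P then a * b else 0)"
  by simp

lemma if_mult0': "(b::real) * (if P then a else 0) = (if P then b * a else 0)"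
  by simp

lemma diag_mat_mulv: "diag_mat l *v y = (\<chi> i. l$i * y$i)"
  by (simp add: diag_mat_def matrix_vector_mult_def vec_eq_iff if_mult0)

lemma qf_diag: "qf (diag_mat l) y = (\<Sum>i\<in>UNIV. l$i * (y$i)^2)"
  unfolding qf_def diag_mat_mulv by (simp add: inner_vec_def power2_eq_square algebra_simps)

lemma diag_mult: "diag_mat a ** diag_mat b = diag_mat (\<chi> i. a$i * b$i)"
  by (simp add: diag_mat_def matrix_matrix_mult_def vec_eq_iff if_mult0 if_mult0')

lemma diag_one: "diag_mat (\<chi> i. 1) = mat 1"
  by (simp add: diag_mat_def mat_def vec_eq_iff)

lemma transpose_diag: "transpose (diag_mat a) = diag_mat a"
  by (simp add: diag_mat_def transpose_def vec_eq_iff)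

lemma conj_mult:
  assumes "orthogonal_matrix Q"
  shows "(Q ** diag_mat a ** transpose Q) ** (Q ** diag_mat b ** transpose Q) = Q ** diag_mat (\<chi> i. a$i*b$i) ** transpose Q"
proof -
  have "(Q ** diag_mat a ** transpose Q) ** (Q ** diag_mat b ** transpose Q)
      = Q ** diag_mat a ** (transpose Q ** Q) ** diag_mat b ** transpose Q"
    by (simp add: matrix_mul_assoc)
  also have "\<dots> = Q ** (diag_mat a ** diag_mat b) ** transpose Q"
    using assms by (simp add: orthogonal_matrix_def matrix_mul_assoc)
  finally show ?thesis by (simp add: diag_mult)
qed

lemma conj_sym: "transpose (Q ** diag_mat a ** transpose Q) = Q ** diag_mat a ** transpose Q"
  by (simp add: matrix_transpose_mul transpose_diag matrix_mul_assoc)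

lemma qf_conj_diag:
  assumes "orthogonal_matrix Q"
  shows "qf (Q ** diag_mat a ** transpose Q) (Q *v y) = (\<Sum>i\<in>UNIV. a$i * (y$i)^2)"
proof -
  have "transpose Q *v (Q *v y) = y" using assms
    by (simp add: matrix_vector_mul_assoc orthogonal_matrix_def)
  thus ?thesis by (simp add: qf_conj qf_diag)
qed

lemma qf_conj_axis:
  assumes "orthogonal_matrix Q"
  shows "qf (Q ** diag_mat a ** transpose Q) (Q *v axis i 1) = a$i"
  using qf_conj_diag[OF assms, of a "axis i 1"]
  by (simp add: axis_def if_mult0' power2_eq_square)

lemma matrix_inv_conj:
  assumes Q: "orthogonal_matrix Q" and l: "\<forall>i. l$i \<noteq> 0"
  shows "matrix_inv (Q ** diag_mat l ** transpose Q) = Q ** diag_mat (\<chi> i. 1 / l$i) ** transpose Q"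
proof -
  let ?B = "Q ** diag_mat l ** transpose Q"
  let ?X = "Q ** diag_mat (\<chi> i. 1 / l$i) ** transpose Q"
  have one: "Q ** mat 1 ** transpose Q = mat 1" using Q by (simp add: orthogonal_matrix_def)
  have BX: "?B ** ?X = mat 1" unfolding conj_mult[OF Q] using l one
    by (simp add: diag_one[symmetric])
  have XB: "?X ** ?B = mat 1" unfolding conj_mult[OF Q] using l one
    by (simp add: diag_one[symmetric])
  have "\<exists>M. ?B ** M = mat 1 \<and> M ** ?B = mat 1" using BX XB by blast
  hence M: "?B ** matrix_inv ?B = mat 1 \<and> matrix_inv ?B ** ?B = mat 1"
    unfolding matrix_inv_def by (rule someI_ex)
  have "matrix_inv ?B = matrix_inv ?B ** (?B ** ?X)" by (simp add: BX)
  also have "\<dots> = (matrix_inv ?B ** ?B) ** ?X" by (simp add: matrix_mul_assoc)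
  also have "\<dots> = ?X" using M by simp
  finally show ?thesis .
qed

lemma pd_decomp:
  fixes A :: "real^'n^'n"
  assumes pd: "pos_def A"
  shows "\<exists>Q l. orthogonal_matrix Q \<and> (\<forall>i. l$i > 0) \<and> A = Q ** diag_mat l ** transpose Q \<and>
     mat_powr A a = Q ** diag_mat (\<chi> i. (l $ i) powr a) ** transpose Q"
proof -
  have sym: "transpose A = A" using pd unfolding pos_def_def by blast
  obtain Q0 l0 where "orthogonal_matrix Q0" "A = Q0 ** diag_mat l0 ** transpose Q0"
    using spectral[OF sym] by blast
  hence ex: "\<exists>B. \<exists>Q l. orthogonal_matrix Q \<and> A = Q ** diag_mat l ** transpose Q \<and>
      B = Q ** diag_mat (\<chi> i. (l $ i) powr a) ** transpose Q" by blast
  obtain Q l where Q: "orthogonal_matrix Q" and AQ: "A = Q ** diag_mat l ** transpose Q"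
    and P: "mat_powr A a = Q ** diag_mat (\<chi> i. (l $ i) powr a) ** transpose Q"
    using someI_ex[OF ex] unfolding mat_powr_def by blast
  have "l$i > 0" for i
  proof -
    have "Q *v axis i 1 \<noteq> 0"
    proof
      assume "Q *v axis i 1 = 0"
      hence "transpose Q *v (Q *v axis i 1) = 0" by simp
      hence "axis i 1 = (0::real^'n)" using Q by (simp add: matrix_vector_mul_assoc orthogonal_matrix_def)
      thus False by (simp add: axis_eq_0_iff)
    qed
    hence "qf A (Q *v axis i 1) > 0" using pd unfolding pos_def_def qf_def by blast
    thus ?thesis using qf_conj_axis[OF Q] AQ by simp
  qed
  thus ?thesis using Q AQ P by blast
qed


lemma amgm2:
  fixes u p q :: real
  assumes "u^2 \<le> p * q" "p \<ge> 0" "q \<ge> 0"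
  shows "2 * u \<le> p + q"
proof (rule ccontr)
  assume "\<not> 2 * u \<le> p + q"
  hence "p + q < 2 * u" by simp
  hence "(p + q)^2 < (2*u)^2" using assms(2,3) by (intro power_strict_mono) auto
  moreover have "(p - q)^2 \<ge> 0" by simp
  ultimately show False using assms(1) by (simp add: power2_eq_square algebra_simps)
qed

lemma ax_inner: "axis p a \<bullet> ((C::real^'n^'n) *v axis q b) = a * b * C$p$q"
proof -
  have "(C *v axis q b) $ p = C$p$q * b" by (simp add: matrix_vector_mult_def axis_def if_mult0')
  thus ?thesis by (simp only: inner_axis') simp
qed

lemma qf_axis: "qf (C::real^'n^'n) (axis i 1) = C$i$i"
  unfolding qf_def by (simp add: ax_inner)

lemma psd_offdiag:
  fixes C :: "real^'n^'n"
  assumes sym: "transpose C = C" and psd: "\<forall>z. qf C z \<ge> 0" and pos: "C$i$i > 0"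
  shows "(C$i$j)^2 \<le> C$i$i * C$j$j"
proof (cases "i = j")
  case True thus ?thesis by (simp add: power2_eq_square)
next
  case False
  have cji: "C$j$i = C$i$j" using sym by (metis transpose_def vec_lambda_beta)
  define s where "s = - C$i$j / C$i$i"
  have "qf C (axis i s + axis j 1) = s^2 * C$i$i + 2 * s * C$i$j + C$j$j"
    unfolding qf_def using cji
    by (simp add: matrix_vector_right_distrib inner_add_left inner_add_right ax_inner power2_eq_square algebra_simps)
  also have "\<dots> = C$j$j - (C$i$j)^2 / C$i$i" unfolding s_def using pos
    by (simp add: power2_eq_square field_simps)
  finally have "0 \<le> C$j$j - (C$i$j)^2 / C$i$i" using psd by metis
  thus ?thesis using pos by (simp add: field_simps)
qed

lemma qf_sum: "qf (C::real^'n^'n) y = (\<Sum>i\<in>UNIV. \<Sum>j\<in>UNIV. C$i$j * y$i * y$j)"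
  unfolding qf_def by (simp add: inner_vec_def matrix_vector_mult_def sum_distrib_left algebra_simps)

lemma core_ineq:
  fixes C :: "real^'n^'n" and l y :: "real^'n"
  assumes l: "\<forall>i. l$i > 0" and off: "\<forall>i j. (C$i$j)^2 \<le> C$i$i * C$j$j" and dpos: "\<forall>i. C$i$i \<ge> 0"
  shows "qf C y \<le> (\<Sum>i\<in>UNIV. C$i$i / l$i) * (\<Sum>j\<in>UNIV. l$j * (y$j)^2)"
proof -
  define a where "a i = C$i$i / l$i" for i
  define b where "b j = l$j * (y$j)^2" for j
  have a0: "a i \<ge> 0" for i unfolding a_def using l dpos by (simp add: less_imp_le)
  have b0: "b j \<ge> 0" for j unfolding b_def using l by (simp add: less_imp_le)
  have trm: "2 * (C$i$j * y$i * y$j) \<le> a i * b j + a j * b i" for i j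
  proof (rule amgm2)
    have "(a i * b j) * (a j * b i) = C$i$i * C$j$j * (y$i)^2 * (y$j)^2"
    proof -
      have li: "l$i \<noteq> 0" "l$j \<noteq> 0" using l by (metis less_irrefl)+
      thus ?thesis unfolding a_def b_def by (simp add: field_simps power2_eq_square)
    qed
    moreover have "(C$i$j * y$i * y$j)^2 = (C$i$j)^2 * (y$i)^2 * (y$j)^2" by (simp add: power_mult_distrib)
    moreover have "(C$i$j)^2 * ((y$i)^2 * (y$j)^2) \<le> C$i$i * C$j$j * ((y$i)^2 * (y$j)^2)"
      using off by (intro mult_right_mono) auto
    ultimately show "(C$i$j * y$i * y$j)^2 \<le> (a i * b j) * (a j * b i)" by (simp add: mult.assoc)
    show "a i * b j \<ge> 0" using a0 b0 by simp
    show "a j * b i \<ge> 0" using a0 b0 by simp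
  qed
  have "2 * qf C y = (\<Sum>i\<in>UNIV. \<Sum>j\<in>UNIV. 2 * (C$i$j * y$i * y$j))"
    unfolding qf_sum by (simp add: sum_distrib_left)
  also have "\<dots> \<le> (\<Sum>i\<in>UNIV. \<Sum>j\<in>UNIV. a i * b j + a j * b i)"
    by (intro sum_mono trm)
  also have "\<dots> = (\<Sum>i\<in>UNIV. \<Sum>j\<in>UNIV. a i * b j) + (\<Sum>i\<in>UNIV. \<Sum>j\<in>UNIV. a j * b i)"
    by (simp add: sum.distrib)
  also have "(\<Sum>i\<in>UNIV. \<Sum>j\<in>UNIV. a j * b i) = (\<Sum>i\<in>UNIV. \<Sum>j\<in>UNIV. a i * b j)"
    by (rule sum.swap)
  also have "(\<Sum>i\<in>UNIV. \<Sum>j\<in>UNIV. a i * b j) = sum a UNIV * sum b UNIV"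
    by (simp add: sum_product)
  finally show ?thesis unfolding a_def b_def by simp
qed

lemma trace_diag_right: "trace ((M::real^'n^'n) ** diag_mat d) = (\<Sum>i\<in>UNIV. M$i$i * d$i)"
  by (simp add: trace_def matrix_matrix_mult_def diag_mat_def if_mult0')

lemma chain_step:
  fixes A B :: "real^'n^'n"
  assumes pA: "pos_def A" and pB: "pos_def B"
  shows "trace (A ** matrix_inv B) > 0 \<and> (\<forall>x. qf A x \<le> trace (A ** matrix_inv B) * qf B x)"
proof -
  obtain Q l where Q: "orthogonal_matrix Q" and l: "\<forall>i. l$i > 0" and BQ: "B = Q ** diag_mat l ** transpose Q"
    using pd_decomp[OF pB, of 1] by blast
  have QQ: "transpose Q ** Q = mat 1" "Q ** transpose Q = mat 1" using Q by (auto simp: orthogonal_matrix_def)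
  define C where "C = transpose Q ** A ** Q"
  have AC: "A = Q ** C ** transpose Q"
  proof -
    have "Q ** C ** transpose Q = (Q ** transpose Q) ** A ** (Q ** transpose Q)"
      unfolding C_def by (simp add: matrix_mul_assoc)
    thus ?thesis using QQ by simp
  qed
  have symA: "transpose A = A" using pA unfolding pos_def_def by blast
  have symC: "transpose C = C" unfolding C_def using symA by (simp add: matrix_transpose_mul matrix_mul_assoc)
  have qfC: "qf C z = qf A (Q *v z)" for z
  proof -
    have "transpose Q *v (Q *v z) = z" using QQ by (simp add: matrix_vector_mul_assoc)
    thus ?thesis unfolding AC qf_conj by simp
  qed
  have Qz: "Q *v z \<noteq> 0" if "z \<noteq> 0" for z
  proof
    assume "Q *v z = 0"
    hence "transpose Q *v (Q *v z) = 0" by simp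
    thus False using QQ that by (simp add: matrix_vector_mul_assoc)
  qed
  have psd: "\<forall>z. qf C z \<ge> 0"
  proof
    fix z show "qf C z \<ge> 0"
    proof (cases "z = 0")
      case True thus ?thesis by (simp add: qf_def)
    next
      case False
      have "qf A (Q *v z) > 0" using pA Qz[OF False] unfolding pos_def_def qf_def by blast
      thus ?thesis using qfC[of z] by simp
    qed
  qed
  have dpos: "C$i$i > 0" for i
  proof -
    have "qf A (Q *v axis i 1) > 0" using pA Qz[of "axis i 1"] unfolding pos_def_def qf_def
      by (simp add: axis_eq_0_iff)
    thus ?thesis using qfC[of "axis i 1"] qf_axis[of C i] by simp
  qed
  have off: "\<forall>i j. (C$i$j)^2 \<le> C$i$i * C$j$j"
    using psd_offdiag[OF symC psd dpos] by blast
  have inv: "matrix_inv B = Q ** diag_mat (\<chi> i. 1 / l$i) ** transpose Q"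
  proof -
    have "\<forall>i. l$i \<noteq> 0" using l by (metis less_irrefl)
    thus ?thesis unfolding BQ by (rule matrix_inv_conj[OF Q])
  qed
  have tr: "trace (A ** matrix_inv B) = (\<Sum>i\<in>UNIV. C$i$i / l$i)"
  proof -
    have "trace (A ** matrix_inv B) = trace ((A ** Q ** diag_mat (\<chi> i. 1 / l$i)) ** transpose Q)"
      unfolding inv by (simp add: matrix_mul_assoc)
    also have "\<dots> = trace (transpose Q ** (A ** Q ** diag_mat (\<chi> i. 1 / l$i)))" by (rule trace_mul_sym)
    also have "\<dots> = trace (C ** diag_mat (\<chi> i. 1 / l$i))" unfolding C_def by (simp add: matrix_mul_assoc)
    also have "\<dots> = (\<Sum>i\<in>UNIV. C$i$i / l$i)" by (simp add: trace_diag_right)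
    finally show ?thesis .
  qed
  have "(\<Sum>i\<in>UNIV. C$i$i / l$i) > 0" using dpos l by (intro sum_pos) auto
  moreover have "qf A x \<le> (\<Sum>i\<in>UNIV. C$i$i / l$i) * qf B x" for x
  proof -
    have "qf A x = qf C (transpose Q *v x)" unfolding AC qf_conj ..
    also have "\<dots> \<le> (\<Sum>i\<in>UNIV. C$i$i / l$i) * (\<Sum>j\<in>UNIV. l$j * ((transpose Q *v x)$j)^2)"
      using core_ineq[OF l off] dpos less_imp_le by blast
    also have "(\<Sum>j\<in>UNIV. l$j * ((transpose Q *v x)$j)^2) = qf B x"
      unfolding BQ qf_conj qf_diag ..
    finally show ?thesis .
  qed
  ultimately show ?thesis unfolding tr by blast
qed


lemma chain_prod:
  fixes A :: "nat \<Rightarrow> real^'n^'n"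
  assumes pd: "\<forall>i\<in>{1..m}. pos_def (A i)"
  shows "n < m \<Longrightarrow> (\<Prod>i=1..n. trace (A i ** matrix_inv (A (i+1)))) > 0 \<and>
     (\<forall>x. qf (A 1) x \<le> (\<Prod>i=1..n. trace (A i ** matrix_inv (A (i+1)))) * qf (A (Suc n)) x)"
proof (induction n)
  case 0 thus ?case by simp
next
  case (Suc n)
  let ?P = "\<Prod>i=1..n. trace (A i ** matrix_inv (A (i+1)))"
  let ?t = "trace (A (Suc n) ** matrix_inv (A (Suc n + 1)))"
  have IH: "?P > 0" "\<forall>x. qf (A 1) x \<le> ?P * qf (A (Suc n)) x" using Suc by auto
  have st: "?t > 0 \<and> (\<forall>x. qf (A (Suc n)) x \<le> ?t * qf (A (Suc n + 1)) x)"
    using Suc.prems pd by (intro chain_step) auto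
  have eq: "(\<Prod>i=1..Suc n. trace (A i ** matrix_inv (A (i+1)))) = ?P * ?t" by simp
  show ?case unfolding eq
  proof (intro conjI allI)
    show "?P * ?t > 0" using IH st by simp
    fix x
    have "qf (A 1) x \<le> ?P * qf (A (Suc n)) x" using IH by blast
    also have "\<dots> \<le> ?P * (?t * qf (A (Suc n + 1)) x)"
      using IH st by (intro mult_left_mono) auto
    finally show "qf (A 1) x \<le> ?P * ?t * qf (A (Suc (Suc n))) x" by (simp add: mult.assoc)
  qed
qed

lemma qf_M: "qf ((Q::real^'n^'n) ** diag_mat l ** transpose Q) x = (\<Sum>i\<in>UNIV. l$i * ((transpose Q *v x)$i)^2)"
  by (simp add: qf_conj qf_diag)

lemma qf_M_nonneg: "\<forall>i. l$i \<ge> 0 \<Longrightarrow> qf ((Q::real^'n^'n) ** diag_mat l ** transpose Q) x \<ge> 0"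
  unfolding qf_M by (intro sum_nonneg) auto

lemma LH:
  fixes X Y :: "real^'n^'n"
  assumes sX: "transpose X = X" and sY: "transpose Y = Y" and pY: "\<forall>x. qf Y x \<ge> 0"
    and sq: "\<forall>x. qf (X ** X) x \<le> qf (Y ** Y) x"
  shows "qf X x \<le> qf Y x"
proof -
  have sZ: "transpose (X - Y) = X - Y" using sX sY by (simp add: transpose_def vec_eq_iff)
  obtain Q l where Q: "orthogonal_matrix Q" and Z: "X - Y = Q ** diag_mat l ** transpose Q"
    using spectral[OF sZ] by blast
  have QQ: "transpose Q ** Q = mat 1" using Q by (simp add: orthogonal_matrix_def)
  have lneg: "l$i \<le> 0" for i
  proof (rule ccontr)
    assume "\<not> l$i \<le> 0"
    hence lp: "l$i > 0" by simp
    define v where "v = Q *v axis i 1"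
    have Zv: "(X - Y) *v v = l$i *\<^sub>R v"
    proof -
      have "(X - Y) *v v = Q *v (diag_mat l *v ((transpose Q ** Q) *v axis i 1))"
        unfolding Z v_def by (simp add: matrix_vector_mul_assoc[symmetric] matrix_mul_assoc)
      also have "\<dots> = Q *v (l$i *\<^sub>R axis i 1)"
      proof -
        have "diag_mat l *v axis i 1 = l$i *\<^sub>R axis i 1" by (simp add: diag_mat_mulv axis_def vec_eq_iff)
        thus ?thesis unfolding QQ by simp
      qed
      finally show ?thesis unfolding v_def by (simp add: matrix_vector_mult_scaleR)
    qed
    have Xv: "X *v v = Y *v v + l$i *\<^sub>R v" using Zv by (simp add: matrix_vector_mult_diff_rdistrib algebra_simps)
    have vv: "v \<bullet> v = 1"
    proof -
      have "v \<bullet> v = (transpose Q *v v) \<bullet> axis i 1" using inner_mat_left[of v Q "axis i 1"] unfolding v_def by simp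
      also have "transpose Q *v v = axis i 1" unfolding v_def by (simp add: matrix_vector_mul_assoc QQ)
      finally show ?thesis by (simp add: inner_axis_axis)
    qed
    have "qf (X ** X) v = (X *v v) \<bullet> (X *v v)"
    proof -
      have "(X ** X) *v v = X *v (X *v v)" by (simp add: matrix_vector_mul_assoc)
      thus ?thesis unfolding qf_def using sym_inner[OF sX, of v "X *v v"] by simp
    qed
    moreover have "qf (Y ** Y) v = (Y *v v) \<bullet> (Y *v v)"
    proof -
      have "(Y ** Y) *v v = Y *v (Y *v v)" by (simp add: matrix_vector_mul_assoc)
      thus ?thesis unfolding qf_def using sym_inner[OF sY, of v "Y *v v"] by simp
    qed
    ultimately have "(X *v v) \<bullet> (X *v v) \<le> (Y *v v) \<bullet> (Y *v v)" using sq by metis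
    moreover have "(X *v v) \<bullet> (X *v v) = (Y *v v) \<bullet> (Y *v v) + 2 * l$i * (v \<bullet> (Y *v v)) + (l$i)^2 * (v \<bullet> v)"
    proof -
      have c: "(Y *v v) \<bullet> v = v \<bullet> (Y *v v)" by (rule inner_commute)
      show ?thesis unfolding Xv inner_add_left inner_add_right inner_scaleR_left inner_scaleR_right c
        by (simp add: power2_eq_square algebra_simps)
    qed
    ultimately have h: "2 * l$i * (v \<bullet> (Y *v v)) + (l$i)^2 * (v \<bullet> v) \<le> 0" by linarith
    moreover have "v \<bullet> (Y *v v) \<ge> 0" using pY unfolding qf_def by blast
    hence "l$i * (v \<bullet> (Y *v v)) \<ge> 0" using lp by simp
    moreover have "(l$i)^2 > 0" using lp by simp
    ultimately show False using vv by simp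
  qed
  have "qf X x - qf Y x = qf (X - Y) x" unfolding qf_def
    by (simp add: matrix_vector_mult_diff_rdistrib inner_diff_right)
  also have "\<dots> \<le> 0" unfolding Z qf_M using lneg by (intro sum_nonpos) (simp add: mult_nonpos_nonneg)
  finally show ?thesis by simp
qed

definition pw :: "real^'n \<Rightarrow> real \<Rightarrow> real^'n" where
  "pw l e = (\<chi> i. l$i powr e)"

lemma LHk:
  fixes Q1 Q2 :: "real^'n^'n"
  assumes Q1: "orthogonal_matrix Q1" and Q2: "orthogonal_matrix Q2"
    and l1: "\<forall>i. l1$i > 0" and l2: "\<forall>i. l2$i > 0"
    and le: "\<forall>x. qf (Q1 ** diag_mat l1 ** transpose Q1) x \<le> qf (Q2 ** diag_mat l2 ** transpose Q2) x"
  shows "\<forall>x. qf (Q1 ** diag_mat (pw l1 ((1/2)^k)) ** transpose Q1) x \<le> qf (Q2 ** diag_mat (pw l2 ((1/2)^k)) ** transpose Q2) x"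
proof (induction k)
  case 0
  have "pw l1 1 = l1" "pw l2 1 = l2" using l1 l2 by (auto simp: pw_def vec_eq_iff less_imp_le)
  thus ?case using le by simp
next
  case (Suc k)
  let ?e = "((1::real)/2)^k"
  have sq1: "pw l1 ?e = (\<chi> i. (pw l1 (?e/2))$i * (pw l1 (?e/2))$i)"
    by (simp add: pw_def vec_eq_iff powr_add[symmetric])
  have sq2: "pw l2 ?e = (\<chi> i. (pw l2 (?e/2))$i * (pw l2 (?e/2))$i)"
    by (simp add: pw_def vec_eq_iff powr_add[symmetric])
  have e2: "((1::real)/2)^Suc k = ?e/2" by simp
  show ?case unfolding e2
  proof
    fix x
    show "qf (Q1 ** diag_mat (pw l1 (?e/2)) ** transpose Q1) x \<le> qf (Q2 ** diag_mat (pw l2 (?e/2)) ** transpose Q2) x"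
    proof (rule LH[OF conj_sym conj_sym])
      show "\<forall>x. qf (Q2 ** diag_mat (pw l2 (?e/2)) ** transpose Q2) x \<ge> 0"
        by (intro allI qf_M_nonneg) (simp add: pw_def)
      show "\<forall>x. qf ((Q1 ** diag_mat (pw l1 (?e/2)) ** transpose Q1) ** (Q1 ** diag_mat (pw l1 (?e/2)) ** transpose Q1)) x
           \<le> qf ((Q2 ** diag_mat (pw l2 (?e/2)) ** transpose Q2) ** (Q2 ** diag_mat (pw l2 (?e/2)) ** transpose Q2)) x"
        unfolding conj_mult[OF Q1] conj_mult[OF Q2] sq1[symmetric] sq2[symmetric] using Suc.IH .
    qed
  qed
qed

lemma trace_bound:
  fixes X Q :: "real^'n^'n"
  assumes Q: "orthogonal_matrix Q" and mu: "\<forall>i. mu$i > 0"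
    and le: "\<forall>x. qf X x \<le> S * qf (Q ** diag_mat mu ** transpose Q) x"
  shows "trace (X ** (Q ** diag_mat (\<chi> i. 1 / mu$i) ** transpose Q)) \<le> S * real CARD('n)"
proof -
  have "trace (X ** (Q ** diag_mat (\<chi> i. 1 / mu$i) ** transpose Q)) = trace ((X ** Q ** diag_mat (\<chi> i. 1 / mu$i)) ** transpose Q)"
    by (simp add: matrix_mul_assoc)
  also have "\<dots> = trace (transpose Q ** (X ** Q ** diag_mat (\<chi> i. 1 / mu$i)))" by (rule trace_mul_sym)
  also have "\<dots> = trace ((transpose Q ** X ** Q) ** diag_mat (\<chi> i. 1 / mu$i))" by (simp add: matrix_mul_assoc)
  also have "\<dots> = (\<Sum>i\<in>UNIV. (transpose Q ** X ** Q)$i$i / mu$i)" by (simp add: trace_diag_right)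
  also have "\<dots> \<le> (\<Sum>i\<in>(UNIV::'n set). S)"
  proof (rule sum_mono)
    fix i :: 'n
    have "(transpose Q ** X ** Q)$i$i = qf X (Q *v axis i 1)"
    proof -
      have "(transpose Q ** X ** Q)$i$i = qf (transpose Q ** X ** transpose (transpose Q)) (axis i 1)"
        by (simp add: qf_axis)
      also have "\<dots> = qf X (Q *v axis i 1)" using qf_conj[of "transpose Q" X "axis i 1"] by simp
      finally show ?thesis .
    qed
    also have "\<dots> \<le> S * mu$i" using le qf_conj_axis[OF Q, of mu i] by metis
    finally have "(transpose Q ** X ** Q)$i$i \<le> S * mu$i" .
    thus "(transpose Q ** X ** Q)$i$i / mu$i \<le> S" using mu by (simp add: divide_le_eq)
  qed
  also have "\<dots> = S * real CARD('n)" by simp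
  finally show ?thesis .
qed


lemma qf_M_scale: "qf ((Q::real^'n^'n) ** diag_mat (\<chi> i. c * l$i) ** transpose Q) x = c * qf (Q ** diag_mat l ** transpose Q) x"
  unfolding qf_M by (simp add: sum_distrib_left mult.assoc)

lemma alpha_le: "real (m - 1) * ((1::real)/2)^m \<le> 1"
proof -
  have "m - 1 < 2^m" by (metis diff_le_self le_less_trans less_exp)
  hence "real (m - 1) \<le> 2^m" by (metis less_imp_le of_nat_le_iff of_nat_numeral of_nat_power)
  thus ?thesis by (simp add: power_divide field_simps)
qed

theorem lemmaC2:
  fixes m :: nat
  assumes "m \<ge> 2"
  shows "\<exists>\<alpha> c d :: real. \<alpha> > 0 \<and> c > 0 \<and> d \<ge> 0 \<and>
    (\<forall>A :: nat \<Rightarrow> real^'n^'n. (\<forall>i\<in>{1..m}. pos_def (A i)) \<longrightarrow>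
      (\<Sum>i=1..m-1. trace (A i ** matrix_inv (A (i+1))))
        \<ge> c * trace (mat_powr (A 1) \<alpha> ** mat_powr (A m) (-\<alpha>)) - d)"
proof (intro exI conjI allI impI)
  define \<alpha> :: real where "\<alpha> = (1/2)^m"
  show "\<alpha> > 0" unfolding \<alpha>_def by simp
  show "1 / real CARD('n) > 0" by simp
  show "(1::real) \<ge> 0" by simp
  fix A :: "nat \<Rightarrow> real^'n^'n"
  assume pd: "\<forall>i\<in>{1..m}. pos_def (A i)"
  define t where "t i = trace (A i ** matrix_inv (A (i+1)))" for i
  define T where "T = (\<Prod>i=1..m-1. t i)"
  have mm: "Suc (m - 1) = m" "m - 1 < m" using assms by auto
  have ch: "T > 0 \<and> (\<forall>x. qf (A 1) x \<le> T * qf (A m) x)"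
    using chain_prod[OF pd mm(2)] unfolding T_def t_def mm(1) by blast
  have tpos: "t i > 0" if "i \<in> {1..m-1}" for i
    unfolding t_def using that pd by (intro conjunct1[OF chain_step]) auto
  obtain Q1 l1 where Q1: "orthogonal_matrix Q1" and l1: "\<forall>i. l1$i > 0"
    and A1: "A 1 = Q1 ** diag_mat l1 ** transpose Q1"
    and P1: "mat_powr (A 1) \<alpha> = Q1 ** diag_mat (\<chi> i. (l1 $ i) powr \<alpha>) ** transpose Q1"
    using pd_decomp[of "A 1" \<alpha>] pd assms by auto
  obtain Q2 l2 where Q2: "orthogonal_matrix Q2" and l2: "\<forall>i. l2$i > 0"
    and Am: "A m = Q2 ** diag_mat l2 ** transpose Q2"
    and Pm: "mat_powr (A m) (-\<alpha>) = Q2 ** diag_mat (\<chi> i. (l2 $ i) powr (-\<alpha>)) ** transpose Q2"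
    using pd_decomp[of "A m" "-\<alpha>"] pd assms by auto
  have Tp: "T > 0" using ch by blast
  have l2T: "\<forall>i. (\<chi> i. T * l2$i)$i > 0" using l2 Tp by simp
  have le0: "\<forall>x. qf (Q1 ** diag_mat l1 ** transpose Q1) x \<le> qf (Q2 ** diag_mat (\<chi> i. T * l2$i) ** transpose Q2) x"
    using ch unfolding A1 Am qf_M_scale by blast
  have le1: "\<forall>x. qf (Q1 ** diag_mat (pw l1 \<alpha>) ** transpose Q1) x \<le> qf (Q2 ** diag_mat (pw (\<chi> i. T * l2$i) \<alpha>) ** transpose Q2) x"
    using LHk[OF Q1 Q2 l1 l2T le0, of m] unfolding \<alpha>_def by simp
  have pwT: "pw (\<chi> i. T * l2$i) \<alpha> = (\<chi> i. (T powr \<alpha>) * (pw l2 \<alpha>)$i)"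
    by (simp add: pw_def vec_eq_iff powr_mult)
  have le2: "\<forall>x. qf (mat_powr (A 1) \<alpha>) x \<le> (T powr \<alpha>) * qf (Q2 ** diag_mat (pw l2 \<alpha>) ** transpose Q2) x"
  proof
    fix x
    have "qf (Q2 ** diag_mat (pw (\<chi> i. T * l2$i) \<alpha>) ** transpose Q2) x = (T powr \<alpha>) * qf (Q2 ** diag_mat (pw l2 \<alpha>) ** transpose Q2) x"
      unfolding pwT by (rule qf_M_scale)
    moreover have "mat_powr (A 1) \<alpha> = Q1 ** diag_mat (pw l1 \<alpha>) ** transpose Q1" unfolding P1 pw_def ..
    ultimately show "qf (mat_powr (A 1) \<alpha>) x \<le> (T powr \<alpha>) * qf (Q2 ** diag_mat (pw l2 \<alpha>) ** transpose Q2) x"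
      using le1 by metis
  qed
  have mu: "\<forall>i. (pw l2 \<alpha>)$i > 0" using l2 by (metis pw_def vec_lambda_beta powr_gt_zero less_irrefl)
  have Pm': "mat_powr (A m) (-\<alpha>) = Q2 ** diag_mat (\<chi> i. 1 / (pw l2 \<alpha>)$i) ** transpose Q2"
    unfolding Pm by (simp add: pw_def powr_minus_divide)
  have trb: "trace (mat_powr (A 1) \<alpha> ** mat_powr (A m) (-\<alpha>)) \<le> T powr \<alpha> * real CARD('n)"
    unfolding Pm' by (rule trace_bound[OF Q2 mu le2])
  define M where "M = 1 + (\<Sum>i=1..m-1. t i)"
  have "(\<Sum>i=1..m-1. t i) \<ge> 0" using tpos by (intro sum_nonneg) (simp add: less_imp_le)
  hence M1: "M \<ge> 1" unfolding M_def by simp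
  have tM: "t i \<le> M" if "i \<in> {1..m-1}" for i
  proof -
    have "t i \<le> (\<Sum>i=1..m-1. t i)"
      using that tpos by (intro member_le_sum) (auto simp: less_imp_le)
    thus ?thesis unfolding M_def by simp
  qed
  have "T \<le> (\<Prod>i=1..m-1. M)" unfolding T_def
    using tpos tM by (intro prod_mono) (auto simp: less_imp_le)
  hence TM: "T \<le> M ^ (m - 1)" by simp
  have "T powr \<alpha> \<le> (M ^ (m-1)) powr \<alpha>" using TM Tp unfolding \<alpha>_def by (intro powr_mono2) auto
  also have "\<dots> = M powr (real (m-1) * \<alpha>)" using M1 by (simp add: powr_realpow[symmetric] powr_powr)
  also have "\<dots> \<le> M powr 1" using M1 alpha_le[of m] unfolding \<alpha>_def by (intro powr_mono) auto
  also have "\<dots> = M" using M1 by simp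
  finally have TaM: "T powr \<alpha> \<le> M" .
  have n0: "real CARD('n) > 0" by simp
  have "1 / real CARD('n) * trace (mat_powr (A 1) \<alpha> ** mat_powr (A m) (-\<alpha>)) \<le> 1 / real CARD('n) * (T powr \<alpha> * real CARD('n))"
    using trb n0 by (intro mult_left_mono) auto
  also have "\<dots> = T powr \<alpha>" using n0 by simp
  finally have "1 / real CARD('n) * trace (mat_powr (A 1) \<alpha> ** mat_powr (A m) (-\<alpha>)) \<le> M" using TaM by linarith
  thus "1 / real CARD('n) * trace (mat_powr (A 1) \<alpha> ** mat_powr (A m) (-\<alpha>)) - 1 \<le> (\<Sum>i=1..m-1. trace (A i ** matrix_inv (A (i+1))))"
    unfolding M_def t_def by simp
qed


end
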